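(* Let $y$ be a single real variable and $x=(x_1,\dots,x_n)$ real variables, and let $f(x,y)\in\mathbb R[x,y]$. Assume that for every $y_0\in\mathbb R$ the specialized polynomial $f(\cdot,y_0)\in\mathbb R[x]$ is a square in $\mathbb R[x]$. Then there exist $g(y)\in\mathbb R[y]$ and $h(x,y)\in\mathbb R[x,y]$ such that \[ f(x,y)=g(y)\,h(x,y)^2. \] *)

theory Defs
  imports "HOL-Library.Poly_Mapping" "HOL-Computational_Algebra.Polynomial"
begin

text \<open>Real polynomials in variables x_0, x_1, ... : finitely supported maps from
  monomials (exponent vectors) to real coefficients, with the
  convolution product of HOL-Library.Poly_Mapping.\<close>
type_synonym rmpoly = "(nat \<Rightarrow>\<^sub>0 nat) \<Rightarrow>\<^sub>0 real"

text \<open>p lies in R[x_1,...,x_n] (variables indexed 0..n-1).\<close>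
definition in_vars :: "nat \<Rightarrow> rmpoly \<Rightarrow> bool" where
  "in_vars n p \<longleftrightarrow> (\<forall>m \<in> Poly_Mapping.keys p. Poly_Mapping.keys m \<subseteq> {..<n})"

definition const_mp :: "real \<Rightarrow> rmpoly" where
  "const_mp c = Poly_Mapping.single 0 c"

end

theory Submission
  imports Defs "HOL-Computational_Algebra.Computational_Algebra" "HOL-Computational_Algebra.Field_as_Ring"
begin


lemma pseudo_bezout:
  fixes p q :: "'a::idom poly"
  shows "p \<noteq> 0 \<or> q \<noteq> 0 \<Longrightarrow> \<exists>a b d s r1 r2 u v. s \<noteq> 0 \<and> r1 \<noteq> 0 \<and> r2 \<noteq> 0 \<and>
     a*p + b*q = smult s d \<and> smult r1 p = d*u \<and> smult r2 q = d*v"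
proof (induction "if q = 0 then 0 else Suc (degree q)" arbitrary: p q rule: less_induct)
  case (less q p)
  show ?case
  proof (cases "q = 0")
    case True
    then have "1*p + 0*q = smult 1 p \<and> smult 1 p = p*1 \<and> smult 1 q = p*0" by simp
    then show ?thesis by (metis one_neq_zero)
  next
    case False
    define r where "r = pseudo_mod p q"
    from pseudo_mod[OF False, of p] obtain \<alpha> Q where al: "\<alpha> \<noteq> 0" "smult \<alpha> p = q*Q + r"
      and deg: "r = 0 \<or> degree r < degree q" unfolding r_def by blast
    have "(if r = 0 then 0 else Suc (degree r)) < (if q = 0 then 0 else Suc (degree q))"
      using deg False by auto
    from less.hyps[OF this, of q] False obtain a b d s r1 r2 u v where
      IH: "s \<noteq> 0" "r1 \<noteq> 0" "r2 \<noteq> 0" "a*q + b*r = smult s d" "smult r1 q = d*u" "smult r2 r = d*v"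
      by blast
    have e1: "smult \<alpha> b * p + (a - b*Q) * q = smult s d"
    proof -
      have "smult \<alpha> b * p = b * smult \<alpha> p" by (simp add: mult_smult_left mult_smult_right mult.commute)
      also have "\<dots> = b*q*Q + b*r" using al by (simp add: algebra_simps)
      finally show ?thesis using IH(4) by (simp add: algebra_simps)
    qed
    have e2: "smult (\<alpha>*r1*r2) p = d * (smult r2 (u*Q) + smult r1 v)"
    proof -
      have "smult (\<alpha>*r1*r2) p = smult (r1*r2) (smult \<alpha> p)" by (simp add: ac_simps)
      also have "\<dots> = smult r2 (smult r1 q) * Q + smult r1 (smult r2 r)" using al
        by (simp add: algebra_simps smult_add_right mult_smult_left)
      also have "\<dots> = d * (smult r2 (u*Q) + smult r1 v)" using IH(5,6)
        by (simp add: algebra_simps mult_smult_left mult_smult_right)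
      finally show ?thesis .
    qed
    show ?thesis
      apply (rule exI[of _ "smult \<alpha> b"], rule exI[of _ "a - b*Q"], rule exI[of _ d], rule exI[of _ s],
        rule exI[of _ "\<alpha>*r1*r2"], rule exI[of _ r1], rule exI[of _ "smult r2 (u*Q) + smult r1 v"],
        rule exI[of _ u])
      using e1 e2 IH al by simp
  qed
qed

lemma coprime_bezout:
  fixes p q :: "real poly poly"
  assumes pr: "prime_elem p" and dg: "degree p > 0" and nd: "\<not> p dvd q"
  shows "\<exists>a b r. r \<noteq> 0 \<and> a*p + b*q = [:r:]"
proof -
  have p0: "p \<noteq> 0" using dg by auto
  from pseudo_bezout[of p q] p0 obtain a b d s r1 r2 u v where
    H: "s \<noteq> 0" "r1 \<noteq> 0" "r2 \<noteq> 0" "a*p + b*q = smult s d" "smult r1 p = d*u" "smult r2 q = d*v"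
    by blast
  have "d*u = [:r1:]*p" using H(5) by simp
  then have "p dvd d*u" by (simp add: dvd_smult)
  then have "p dvd d \<or> p dvd u" using pr prime_elem_dvd_multD by blast
  then show ?thesis
  proof
    assume "p dvd d"
    have "d*v = [:r2:]*q" using H(6) by simp
    with \<open>p dvd d\<close> have "p dvd [:r2:] * q" by (metis dvd_mult2)
    then have "p dvd [:r2:] \<or> p dvd q" using pr prime_elem_dvd_multD by blast
    moreover have "\<not> p dvd [:r2:]"
    proof
      assume "p dvd [:r2:]"
      from dvd_imp_degree_le[OF this] H(3) dg show False by simp
    qed
    ultimately show ?thesis using nd by blast
  next
    assume "p dvd u"
    then obtain w where w: "u = p*w" by (elim dvdE)
    have "[:r1:] * p = (d*w) * p" using H(5) w by (simp add: ac_simps)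
    then have dw: "d*w = [:r1:]" using p0 by (metis mult_cancel_right)
    then have "d \<noteq> 0" "w \<noteq> 0" using H(2) by auto
    then have "degree d = 0" using dw degree_mult_eq[of d w] by simp
    then obtain c where c: "d = [:c:]" by (metis degree_eq_zeroE)
    have "a*p + b*q = [:s*c:]" using H(4) c by simp
    moreover have "s*c \<noteq> 0" using H(1) \<open>d \<noteq> 0\<close> c by simp
    ultimately show ?thesis by blast
  qed
qed


lemma hom_sum_gen:
  assumes "\<And>a b. h (a+b) = h a + h b" "h 0 = 0"
  shows "h (sum f A) = (\<Sum>x\<in>A. h (f x))"
  by (induct A rule: infinite_finite_induct) (simp_all add: assms)

lemma map_poly_hom_add:
  assumes "\<And>a b. h (a+b) = h a + h b" "h 0 = 0"
  shows "map_poly h (p+q) = map_poly h p + map_poly h q"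
  by (rule poly_eqI) (simp add: coeff_map_poly assms)

lemma map_poly_hom_mult:
  assumes "\<And>a b. h (a+b) = h a + h b" "\<And>a b. h (a*b) = h a * h b" "h 0 = 0"
  shows "map_poly h (p*q) = map_poly h p * map_poly h q"
  by (rule poly_eqI) (simp add: coeff_map_poly coeff_mult hom_sum_gen[of h, OF assms(1,3)] assms)

definition ev :: "real \<Rightarrow> real poly poly \<Rightarrow> real poly" where
  "ev y0 P = map_poly (\<lambda>c. poly c y0) P"

lemma ev_add: "ev y0 (P + Q) = ev y0 P + ev y0 Q"
  unfolding ev_def by (rule map_poly_hom_add) simp_all

lemma ev_mult: "ev y0 (P * Q) = ev y0 P * ev y0 Q"
  unfolding ev_def by (rule map_poly_hom_mult) simp_all

lemma ev_one: "ev y0 1 = 1"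
  unfolding ev_def by simp

lemma ev_power: "ev y0 (P ^ n) = ev y0 P ^ n"
  by (induct n) (simp_all add: ev_mult ev_one)

lemma ev_const: "ev y0 [:r:] = [:poly r y0:]"
  unfolding ev_def by (rule poly_eqI) (simp add: coeff_map_poly coeff_pCons split: nat.splits)

lemma ev_smult: "ev y0 (smult r P) = smult (poly r y0) (ev y0 P)"
  unfolding ev_def by (rule poly_eqI) (simp add: coeff_map_poly)

lemma ev_pderiv: "ev y0 (pderiv P) = pderiv (ev y0 P)"
  unfolding ev_def by (rule poly_eqI) (simp add: coeff_map_poly coeff_pderiv of_nat_poly)

lemma coeff_ev: "coeff (ev y0 P) n = poly (coeff P n) y0"
  unfolding ev_def by (simp add: coeff_map_poly)

lemma degree_ev: "poly (lead_coeff P) y0 \<noteq> 0 \<Longrightarrow> degree (ev y0 P) = degree P"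
  unfolding ev_def by (rule map_poly_degree_eq) simp

lemma key:
  fixes p G :: "real poly poly"
  assumes pr: "prime_elem p" and dg: "degree p > 0" and dv: "p dvd G" and fin: "finite S"
    and sq: "\<forall>y0. y0 \<notin> S \<longrightarrow> (\<exists>Q. ev y0 G = Q^2)"
  shows "p^2 dvd G"
proof (rule ccontr)
  assume nd2: "\<not> p^2 dvd G"
  from dv obtain R where G: "G = p*R" by (elim dvdE)
  have ndR: "\<not> p dvd R"
  proof
    assume "p dvd R"
    then obtain R' where "R = p*R'" by (elim dvdE)
    then have "G = p^2*R'" using G by (simp add: power2_eq_square ac_simps)
    with nd2 show False by simp
  qed
  have p0: "p \<noteq> 0" using dg by auto
  have pd0: "pderiv p \<noteq> 0" using dg by (simp add: pderiv_eq_0_iff)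
  have ndp: "\<not> p dvd pderiv p"
  proof
    assume "p dvd pderiv p"
    from dvd_imp_degree_le[OF this pd0] dg show False by (simp add: degree_pderiv)
  qed
  from coprime_bezout[OF pr dg ndp] obtain a1 b1 r1 where
    B1: "r1 \<noteq> 0" "a1*p + b1*pderiv p = [:r1:]" by blast
  from coprime_bezout[OF pr dg ndR] obtain a2 b2 r2 where
    B2: "r2 \<noteq> 0" "a2*p + b2*R = [:r2:]" by blast
  define z where "z = r1*r2*lead_coeff p"
  have z0: "z \<noteq> 0" using B1 B2 p0 by (simp add: z_def)
  have "finite (S \<union> {y. poly z y = 0})" using fin poly_roots_finite[OF z0] by simp
  then obtain y0 where y0: "y0 \<notin> S \<union> {y. poly z y = 0}"
    using ex_new_if_finite[OF infinite_UNIV_char_0] by blast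
  then have yS: "y0 \<notin> S" and nz: "poly r1 y0 \<noteq> 0" "poly r2 y0 \<noteq> 0" "poly (lead_coeff p) y0 \<noteq> 0"
    by (auto simp: z_def)
  define P where "P = ev y0 p"
  define R0 where "R0 = ev y0 R"
  have degP: "degree P = degree p" unfolding P_def by (rule degree_ev) (use nz in simp)
  have P0: "P \<noteq> 0" using degP dg by auto
  have Pnu: "\<not> is_unit P" using degP dg P0 by (simp add: is_unit_iff_degree)
  from prime_divisor_exists[OF P0 Pnu] obtain \<pi> where piP: "\<pi> dvd P" and pipr: "prime \<pi>" by blast
  have pipe: "prime_elem \<pi>" using pipr by (simp add: prime_imp_prime_elem)
  have e2: "ev y0 a2 * P + ev y0 b2 * R0 = [:poly r2 y0:]"
  proof -
    have "ev y0 (a2*p + b2*R) = ev y0 [:r2:]" using B2(2) by simp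
    then show ?thesis by (simp add: ev_add ev_mult ev_const P_def R0_def)
  qed
  have e1: "ev y0 a1 * P + ev y0 b1 * pderiv P = [:poly r1 y0:]"
  proof -
    have "ev y0 (a1*p + b1*pderiv p) = ev y0 [:r1:]" using B1(2) by simp
    then show ?thesis by (simp add: ev_add ev_mult ev_const ev_pderiv P_def)
  qed
  have nu: "\<not> \<pi> dvd [:c:]" if "c \<noteq> 0" for c
  proof
    assume "\<pi> dvd [:c:]"
    moreover have "is_unit [:c:]" using that by (simp add: is_unit_const_poly_iff dvd_field_iff)
    ultimately have "is_unit \<pi>" using dvd_unit_imp_unit by blast
    with pipr show False by (simp add: not_prime_unit)
  qed
  have npiR: "\<not> \<pi> dvd R0"
  proof
    assume "\<pi> dvd R0"
    then have "\<pi> dvd ev y0 a2 * P + ev y0 b2 * R0" using piP by simp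
    with e2 nu[OF nz(2)] show False by simp
  qed
  have npi2: "\<not> \<pi>^2 dvd P"
  proof
    assume "\<pi>^2 dvd P"
    then obtain W where "P = \<pi>^2*W" by (elim dvdE)
    then have W: "P = \<pi>*(\<pi>*W)" by (simp add: power2_eq_square ac_simps)
    have "pderiv P = \<pi> * pderiv (\<pi>*W) + pderiv \<pi> * (\<pi>*W)" unfolding W by (simp add: pderiv_mult)
    then have "\<pi> dvd pderiv P" by simp
    then have "\<pi> dvd ev y0 a1 * P + ev y0 b1 * pderiv P" using piP by simp
    with e1 nu[OF nz(1)] show False by simp
  qed
  have eG: "ev y0 G = P * R0" by (simp add: G ev_mult P_def R0_def)
  obtain Q where Q: "ev y0 G = Q^2" using sq yS by blast
  have "\<pi> dvd Q^2" using piP eG Q by (metis dvd_mult2)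
  then have "\<pi> dvd Q" by (rule prime_elem_dvd_power[OF pipe])
  then have "\<pi>^2 dvd Q^2" by (rule dvd_power_same)
  then have "\<pi>^2 dvd P*R0" using eG Q by metis
  moreover have "coprime (\<pi>^2) R0" using prime_elem_imp_coprime[OF pipe npiR] by simp
  ultimately have "\<pi>^2 dvd P" by (simp add: coprime_dvd_mult_left_iff)
  with npi2 show False by simp
qed

lemma sq_cancel:
  fixes a b c :: "real poly"
  assumes "a \<noteq> 0" "a^2 * b = c^2"
  shows "\<exists>d. b = d^2"
proof -
  have "a^2 dvd c^2" using assms(2) by (metis dvd_triv_left)
  then have "a dvd c" by simp
  then obtain d where "c = a*d" by (elim dvdE)
  then have "a^2 * b = a^2 * d^2" using assms(2) by (simp add: power_mult_distrib)
  then have "b = d^2" using assms(1) by simp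
  then show ?thesis by blast
qed

lemma exists_prime_factor_deg:
  fixes G :: "real poly poly"
  assumes G0: "G \<noteq> 0" and dG: "degree G > 0"
  shows "\<exists>p. prime_elem p \<and> degree p > 0 \<and> p dvd G"
proof -
  define P where "P = primitive_part G"
  have dP: "degree P = degree G" by (simp add: P_def)
  have P0: "P \<noteq> 0" using G0 by (simp add: P_def)
  have Pnu: "\<not> is_unit P" using dP dG by (auto simp: is_unit_poly_iff)
  from prime_divisor_exists[OF P0 Pnu] obtain p where pP: "p dvd P" and pp: "prime p" by blast
  have cP: "content P = 1" using G0 by (simp add: P_def)
  have "degree p > 0"
  proof (rule ccontr)
    assume "\<not> degree p > 0"
    then obtain c where c: "p = [:c:]" by (metis degree_eq_zeroE gr0I)
    then have "c dvd content P" using pP by (simp add: const_poly_dvd_iff_dvd_content)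
    then have "is_unit c" using cP by simp
    then have "is_unit p" using c by (simp add: is_unit_const_poly_iff)
    with pp show False by (simp add: not_prime_unit)
  qed
  moreover have "P dvd G" unfolding P_def by (metis content_times_primitive_part dvd_triv_right smult_dvd_cancel dvd_refl)
  ultimately show ?thesis using pP pp dvd_trans prime_imp_prime_elem by blast
qed

lemma biv:
  fixes G :: "real poly poly"
  shows "finite S \<Longrightarrow> \<forall>y0. y0 \<notin> S \<longrightarrow> (\<exists>Q. ev y0 G = Q^2) \<Longrightarrow> \<exists>g H. G = smult g (H^2)"
proof (induction "degree G" arbitrary: G S rule: less_induct)
  case less
  show ?case
  proof (cases "G = 0")
    case True
    then show ?thesis by (metis smult_0_left)
  next
    case G0: False
    show ?thesis
    proof (cases "degree G = 0")
      case True
      then obtain c where "G = [:c:]" by (metis degree_eq_zeroE)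
      then have "G = smult c (1^2)" by simp
      then show ?thesis by blast
    next
      case False
      then obtain p where pr: "prime_elem p" and dp: "degree p > 0" and pG: "p dvd G"
        using exists_prime_factor_deg[OF G0] by blast
      have "p^2 dvd G" by (rule key[OF pr dp pG less.prems(1,2)])
      then obtain G' where G': "G = p^2 * G'" by (elim dvdE)
      have p0: "p \<noteq> 0" using dp by auto
      have G'0: "G' \<noteq> 0" using G0 G' by auto
      have "degree G = 2 * degree p + degree G'" using G' p0 G'0
        by (simp add: degree_mult_eq degree_power_eq)
      then have lt: "degree G' < degree G" using dp by simp
      define S' where "S' = S \<union> {y. poly (lead_coeff p) y = 0}"
      have lc0: "lead_coeff p \<noteq> 0" using p0 by simp
      have finS': "finite S'" unfolding S'_def using less.prems(1) poly_roots_finite[OF lc0] by simp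
      have "\<forall>y0. y0 \<notin> S' \<longrightarrow> (\<exists>Q. ev y0 G' = Q^2)"
      proof (intro allI impI)
        fix y0 assume y0: "y0 \<notin> S'"
        then obtain Q where Q: "ev y0 G = Q^2" using less.prems(2) by (auto simp: S'_def)
        have "degree (ev y0 p) = degree p" by (rule degree_ev) (use y0 in \<open>simp add: S'_def\<close>)
        then have "ev y0 p \<noteq> 0" using dp by auto
        moreover have "(ev y0 p)^2 * ev y0 G' = Q^2" using Q G' by (simp add: ev_mult ev_power)
        ultimately show "\<exists>Q. ev y0 G' = Q^2" by (rule sq_cancel)
      qed
      from less.hyps[OF lt finS' this] obtain g H where "G' = smult g (H^2)" by blast
      then have "G = smult g ((p*H)^2)" using G' by (simp add: power_mult_distrib)
      then show ?thesis by blast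
    qed
  qed
qed



type_synonym mono = "nat \<Rightarrow>\<^sub>0 nat"

definition enc :: "nat \<Rightarrow> nat \<Rightarrow> mono \<Rightarrow> nat" where
  "enc n D m = (\<Sum>i<n. Poly_Mapping.lookup m i * D^i)"

lemma enc_add: "enc n D (a + b) = enc n D a + enc n D b"
  unfolding enc_def by (simp add: lookup_add algebra_simps sum.distrib)

definition K :: "nat \<Rightarrow> nat \<Rightarrow> rmpoly \<Rightarrow> real poly" where
  "K n D p = (\<Sum>m\<in>Poly_Mapping.keys p. monom (Poly_Mapping.lookup p m) (enc n D m))"

lemma K_superset:
  assumes "finite A" "Poly_Mapping.keys p \<subseteq> A"
  shows "K n D p = (\<Sum>m\<in>A. monom (Poly_Mapping.lookup p m) (enc n D m))"
  unfolding K_def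
  by (rule sum.mono_neutral_left) (use assms in \<open>auto simp: in_keys_iff\<close>)

lemma K_zero [simp]: "K n D 0 = 0"
  by (simp add: K_def)

lemma K_add: "K n D (p + q) = K n D p + K n D q"
proof -
  let ?A = "Poly_Mapping.keys p \<union> Poly_Mapping.keys q"
  have f: "finite ?A" by simp
  have "K n D (p + q) = (\<Sum>m\<in>?A. monom (Poly_Mapping.lookup (p+q) m) (enc n D m))"
    by (rule K_superset[OF f]) (rule keys_add)
  also have "\<dots> = (\<Sum>m\<in>?A. monom (Poly_Mapping.lookup p m) (enc n D m)) +
      (\<Sum>m\<in>?A. monom (Poly_Mapping.lookup q m) (enc n D m))"
    by (simp add: lookup_add add_monom[symmetric] sum.distrib)
  also have "\<dots> = K n D p + K n D q"
    by (simp add: K_superset[OF f])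
  finally show ?thesis .
qed

lemma K_sum: "K n D (sum f A) = (\<Sum>x\<in>A. K n D (f x))"
  by (rule hom_sum_gen) (simp_all add: K_add)

lemma K_single: "K n D (Poly_Mapping.single m c) = monom c (enc n D m)"
  by (cases "c = 0") (simp_all add: K_def)

lemma pm_sum_single: "p = (\<Sum>m\<in>Poly_Mapping.keys p. Poly_Mapping.single m (Poly_Mapping.lookup p m))"
proof (rule poly_mapping_eqI)
  fix k
  have "Poly_Mapping.lookup (\<Sum>m\<in>Poly_Mapping.keys p. Poly_Mapping.single m (Poly_Mapping.lookup p m)) k
      = (\<Sum>m\<in>Poly_Mapping.keys p. if m = k then Poly_Mapping.lookup p m else 0)"
    by (simp add: lookup_sum lookup_single when_def)
  also have "\<dots> = Poly_Mapping.lookup p k" by (simp add: sum.delta in_keys_iff)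
  finally show "Poly_Mapping.lookup p k = Poly_Mapping.lookup (\<Sum>m\<in>Poly_Mapping.keys p. Poly_Mapping.single m (Poly_Mapping.lookup p m)) k" ..
qed

lemma K_mult: "K n D (p * q) = K n D p * K n D q"
proof -
  let ?s = "\<lambda>p m. Poly_Mapping.single m (Poly_Mapping.lookup p m)"
  have "p * q = (\<Sum>a\<in>Poly_Mapping.keys p. ?s p a) * (\<Sum>b\<in>Poly_Mapping.keys q. ?s q b)"
    by (metis pm_sum_single)
  also have "\<dots> = (\<Sum>a\<in>Poly_Mapping.keys p. \<Sum>b\<in>Poly_Mapping.keys q. ?s p a * ?s q b)"
    by (rule sum_product)
  finally have pq: "p * q = \<dots>" .
  have "K n D (p*q) = (\<Sum>a\<in>Poly_Mapping.keys p. \<Sum>b\<in>Poly_Mapping.keys q.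
      monom (Poly_Mapping.lookup p a) (enc n D a) * monom (Poly_Mapping.lookup q b) (enc n D b))"
    unfolding pq by (simp add: K_sum mult_single K_single enc_add mult_monom)
  also have "\<dots> = K n D p * K n D q"
    unfolding K_def by (rule sum_product[symmetric])
  finally show ?thesis .
qed

lemma K_one: "K n D 1 = 1"
  using K_single[of n D 0 1] by (simp add: enc_def)

lemma K_const: "K n D (const_mp c) = [:c:]"
  by (simp add: const_mp_def K_single enc_def monom_0)

lemma K_uminus: "K n D (- p) = - K n D p"
  using K_add[of n D p "-p"] by (simp add: eq_neg_iff_add_eq_0)

lemma K_diff: "K n D (p - q) = K n D p - K n D q"
  using K_add[of n D p "-q"] K_uminus[of n D q] by simp

lemma K_power: "K n D (p ^ k) = K n D p ^ k"
  by (induct k) (simp_all add: K_one K_mult)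


lemma digits_bound:
  fixes x :: "nat \<Rightarrow> nat"
  assumes "\<forall>i<n. x i < D"
  shows "(\<Sum>i<n. x i * D^i) < D^n"
  using assms
proof (induct n)
  case 0
  then show ?case by simp
next
  case (Suc n)
  have "(\<Sum>i<Suc n. x i * D^i) = (\<Sum>i<n. x i * D^i) + x n * D^n" by simp
  also have "\<dots> < D^n + x n * D^n" using Suc by simp
  also have "\<dots> = (x n + 1) * D^n" by simp
  also have "\<dots> \<le> D * D^n" using Suc.prems by (intro mult_right_mono) auto
  finally show ?case by simp
qed

lemma digits_unique:
  fixes x y :: "nat \<Rightarrow> nat"
  assumes "\<forall>i<n. x i < D" "\<forall>i<n. y i < D" "(\<Sum>i<n. x i * D^i) = (\<Sum>i<n. y i * D^i)"
  shows "\<forall>i<n. x i = y i"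
  using assms
proof (induct n)
  case 0
  then show ?case by simp
next
  case (Suc n)
  let ?X = "\<Sum>i<n. x i * D^i" and ?Y = "\<Sum>i<n. y i * D^i"
  have px: "\<forall>i<n. x i < D" using Suc.prems(1) by simp
  have py: "\<forall>i<n. y i < D" using Suc.prems(2) by simp
  have bx: "?X < D^n" using px by (rule digits_bound)
  have by': "?Y < D^n" using py by (rule digits_bound)
  have eq: "?X + x n * D^n = ?Y + y n * D^n" using Suc.prems(3) by simp
  have Dn: "D^n \<noteq> 0" using bx by linarith
  have "(?X + x n * D^n) div D^n = x n + ?X div D^n" using Dn by (rule div_mult_self1)
  also have "?X div D^n = 0" using bx by (rule div_less)
  finally have d1: "(?X + x n * D^n) div D^n = x n" by simp
  have "(?Y + y n * D^n) div D^n = y n + ?Y div D^n" using Dn by (rule div_mult_self1)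
  also have "?Y div D^n = 0" using by' by (rule div_less)
  finally have d2: "(?Y + y n * D^n) div D^n = y n" by simp
  have xn: "x n = y n" using d1 d2 eq by metis
  then have "?X = ?Y" using eq by simp
  from Suc.hyps[OF px py this] have "\<forall>i<n. x i = y i" .
  with xn show ?case by (auto simp: less_Suc_eq)
qed

definition good :: "nat \<Rightarrow> nat \<Rightarrow> rmpoly \<Rightarrow> bool" where
  "good n E p \<longleftrightarrow> (\<forall>m\<in>Poly_Mapping.keys p. Poly_Mapping.keys m \<subseteq> {..<n} \<and> (\<forall>i. Poly_Mapping.lookup m i \<le> E))"

lemma enc_inj:
  assumes "E < D" "Poly_Mapping.keys a \<subseteq> {..<n}" "Poly_Mapping.keys b \<subseteq> {..<n}"
    "\<forall>i. Poly_Mapping.lookup a i \<le> E" "\<forall>i. Poly_Mapping.lookup b i \<le> E"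
    "enc n D a = enc n D b"
  shows "a = b"
proof (rule poly_mapping_eqI)
  fix i
  have la: "\<forall>i<n. Poly_Mapping.lookup a i < D" using assms(1,4) le_less_trans by blast
  have lb: "\<forall>i<n. Poly_Mapping.lookup b i < D" using assms(1,5) le_less_trans by blast
  have "(\<Sum>i<n. Poly_Mapping.lookup a i * D^i) = (\<Sum>i<n. Poly_Mapping.lookup b i * D^i)"
    using assms(6) unfolding enc_def .
  from digits_unique[OF la lb this]
  have u: "\<forall>i<n. Poly_Mapping.lookup a i = Poly_Mapping.lookup b i" .
  show "Poly_Mapping.lookup a i = Poly_Mapping.lookup b i"
  proof (cases "i < n")
    case True
    then show ?thesis using u by simp
  next
    case False
    then have "i \<notin> Poly_Mapping.keys a" "i \<notin> Poly_Mapping.keys b" using assms(2,3) by auto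
    then show ?thesis by (simp add: in_keys_iff)
  qed
qed

lemma K_inj:
  assumes g: "good n E p" and ED: "E < D" and K0: "K n D p = 0"
  shows "p = 0"
proof (rule ccontr)
  assume "p \<noteq> 0"
  then have "Poly_Mapping.keys p \<noteq> {}" by simp
  then obtain m0 where m0: "m0 \<in> Poly_Mapping.keys p" by blast
  have "coeff (K n D p) (enc n D m0) = (\<Sum>m\<in>Poly_Mapping.keys p. if enc n D m0 = enc n D m then Poly_Mapping.lookup p m else 0)"
    by (simp add: K_def coeff_sum coeff_monom eq_commute)
  also have "\<dots> = (\<Sum>m\<in>Poly_Mapping.keys p. if m0 = m then Poly_Mapping.lookup p m else 0)"
  proof (rule sum.cong[OF refl])
    fix m assume m: "m \<in> Poly_Mapping.keys p"
    have "enc n D m0 = enc n D m \<longleftrightarrow> m0 = m"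
      using enc_inj[OF ED, of m0 n m] g m m0 unfolding good_def by blast
    then show "(if enc n D m0 = enc n D m then Poly_Mapping.lookup p m else 0) = (if m0 = m then Poly_Mapping.lookup p m else 0)"
      by simp
  qed
  also have "\<dots> = Poly_Mapping.lookup p m0" using m0 by (simp add: sum.delta)
  finally have "Poly_Mapping.lookup p m0 = 0" using K0 by simp
  with m0 show False by (simp add: in_keys_iff)
qed

lemma good_zero [simp]: "good n E 0"
  by (simp add: good_def)

lemma good_mono: "good n E p \<Longrightarrow> E \<le> E' \<Longrightarrow> good n E' p"
  unfolding good_def by (meson order_trans)

lemma good_add: "good n E p \<Longrightarrow> good n E q \<Longrightarrow> good n E (p + q)"
proof -
  assume a: "good n E p" "good n E q"
  have "Poly_Mapping.keys (p + q) \<subseteq> Poly_Mapping.keys p \<union> Poly_Mapping.keys q" by (rule keys_add)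
  then show ?thesis using a unfolding good_def by blast
qed

lemma keys_uminus_pm: "Poly_Mapping.keys (- p) = Poly_Mapping.keys (p :: rmpoly)"
  by (auto simp: in_keys_iff)

lemma good_uminus: "good n E p \<Longrightarrow> good n E (- p)"
  unfolding good_def by (simp add: keys_uminus_pm)

lemma good_diff: "good n E p \<Longrightarrow> good n E q \<Longrightarrow> good n E (p - q)"
  using good_add[of n E p "-q"] good_uminus[of n E q] by simp

lemma good_sum: "(\<And>x. x \<in> A \<Longrightarrow> good n E (f x)) \<Longrightarrow> good n E (sum f A)"
  by (induct A rule: infinite_finite_induct) (simp_all add: good_add)

lemma good_mult: "good n E1 p \<Longrightarrow> good n E2 q \<Longrightarrow> good n (E1 + E2) (p * q)"
proof -
  assume gp: "good n E1 p" and gq: "good n E2 q"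
  show ?thesis unfolding good_def
  proof
    fix m assume "m \<in> Poly_Mapping.keys (p*q)"
    then obtain a b where ab: "m = a + b" "a \<in> Poly_Mapping.keys p" "b \<in> Poly_Mapping.keys q"
      using keys_mult by blast
    have "Poly_Mapping.keys m \<subseteq> {..<n}" using ab gp gq keys_add[of a b] unfolding good_def by blast
    moreover have "\<forall>i. Poly_Mapping.lookup m i \<le> E1 + E2"
      using ab gp gq unfolding good_def by (auto simp: lookup_add intro: add_mono)
    ultimately show "Poly_Mapping.keys m \<subseteq> {..<n} \<and> (\<forall>i. Poly_Mapping.lookup m i \<le> E1 + E2)" by blast
  qed
qed

lemma good_const: "good n 0 (const_mp c)"
  by (simp add: good_def const_mp_def)

lemma good_in_vars: "good n E p \<Longrightarrow> in_vars n p"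
  unfolding good_def in_vars_def by blast

lemma in_vars_good: "in_vars n p \<Longrightarrow> \<exists>E. good n E p"
proof -
  assume iv: "in_vars n p"
  define E where "E = (\<Sum>m\<in>Poly_Mapping.keys p. \<Sum>i<n. Poly_Mapping.lookup m i)"
  have "good n E p" unfolding good_def
  proof (intro ballI conjI allI)
    fix m assume m: "m \<in> Poly_Mapping.keys p"
    then show "Poly_Mapping.keys m \<subseteq> {..<n}" using iv by (simp add: in_vars_def)
    fix i
    show "Poly_Mapping.lookup m i \<le> E"
    proof (cases "i < n")
      case True
      have "Poly_Mapping.lookup m i \<le> (\<Sum>i<n. Poly_Mapping.lookup m i)"
        using True by (intro member_le_sum) auto
      also have "\<dots> \<le> E" unfolding E_def using m
        by (intro member_le_sum[where f="\<lambda>m. \<Sum>i<n. Poly_Mapping.lookup m i"]) auto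
      finally show ?thesis .
    next
      case False
      then have "i \<notin> Poly_Mapping.keys m" using m iv by (auto simp: in_vars_def)
      then show ?thesis by (simp add: in_keys_iff)
    qed
  qed
  then show ?thesis by blast
qed

definition allgood :: "nat \<Rightarrow> nat \<Rightarrow> rmpoly poly \<Rightarrow> bool" where
  "allgood n E P \<longleftrightarrow> (\<forall>k. good n E (coeff P k))"

lemma allgood_add: "allgood n E P \<Longrightarrow> allgood n E Q \<Longrightarrow> allgood n E (P + Q)"
  by (simp add: allgood_def good_add)

lemma allgood_diff: "allgood n E P \<Longrightarrow> allgood n E Q \<Longrightarrow> allgood n E (P - Q)"
  by (simp add: allgood_def good_diff)

lemma allgood_mono: "allgood n E P \<Longrightarrow> E \<le> E' \<Longrightarrow> allgood n E' P"
  by (meson allgood_def good_mono)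

lemma allgood_sum: "(\<And>x. x \<in> A \<Longrightarrow> allgood n E (f x)) \<Longrightarrow> allgood n E (sum f A)"
  by (induct A rule: infinite_finite_induct) (simp_all add: allgood_def good_add)

lemma allgood_mult: "allgood n E1 P \<Longrightarrow> allgood n E2 Q \<Longrightarrow> allgood n (E1 + E2) (P * Q)"
  unfolding allgood_def coeff_mult by (auto intro!: good_sum good_mult)

lemma allgood_const_poly: "good n E q \<Longrightarrow> allgood n E [:q:]"
  by (simp add: allgood_def coeff_pCons split: nat.splits)

lemma allgood_map_const: "allgood n 0 (map_poly const_mp g)"
proof -
  have "const_mp 0 = 0" by (simp add: const_mp_def)
  then show ?thesis by (simp add: allgood_def coeff_map_poly good_const)
qed



definition Kc :: "nat \<Rightarrow> nat \<Rightarrow> rmpoly \<Rightarrow> real poly poly" where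
  "Kc n D a = map_poly (\<lambda>r. [:r:]) (K n D a)"

definition Yv :: "real poly poly" where "Yv = [:[:0,1:]:]"

definition K2 :: "nat \<Rightarrow> nat \<Rightarrow> rmpoly poly \<Rightarrow> real poly poly" where
  "K2 n D f = poly (map_poly (Kc n D) f) Yv"

lemma Kc_add: "Kc n D (a + b) = Kc n D a + Kc n D b"
  unfolding Kc_def K_add by (rule map_poly_hom_add) simp_all

lemma Kc_mult: "Kc n D (a * b) = Kc n D a * Kc n D b"
  unfolding Kc_def K_mult by (rule map_poly_hom_mult) simp_all

lemma Kc_zero [simp]: "Kc n D 0 = 0"
  by (simp add: Kc_def)

lemma const_mp_0 [simp]: "const_mp 0 = 0"
  by (simp add: const_mp_def)

lemma Kc_const: "Kc n D (const_mp a) = [:[:a:]:]"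
  by (simp add: Kc_def K_const map_poly_pCons)

lemma K2_add: "K2 n D (f + g) = K2 n D f + K2 n D g"
proof -
  have "map_poly (Kc n D) (f + g) = map_poly (Kc n D) f + map_poly (Kc n D) g"
    by (rule map_poly_hom_add) (simp_all add: Kc_add)
  then show ?thesis by (simp add: K2_def)
qed

lemma K2_mult: "K2 n D (f * g) = K2 n D f * K2 n D g"
proof -
  have "map_poly (Kc n D) (f * g) = map_poly (Kc n D) f * map_poly (Kc n D) g"
    by (rule map_poly_hom_mult) (simp_all add: Kc_add Kc_mult)
  then show ?thesis by (simp add: K2_def)
qed

lemma K2_zero [simp]: "K2 n D 0 = 0"
  by (simp add: K2_def)

lemma K2_diff: "K2 n D (f - g) = K2 n D f - K2 n D g"
  using K2_add[of n D "f - g" g] by simp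

lemma K2_sum: "K2 n D (sum f A) = (\<Sum>x\<in>A. K2 n D (f x))"
  by (rule hom_sum_gen) (simp_all add: K2_add)

lemma K2_pCons: "K2 n D (pCons c f) = Kc n D c + Yv * K2 n D f"
  by (simp add: K2_def map_poly_pCons)

lemma K2_const: "K2 n D [:c:] = Kc n D c"
  using K2_pCons[of n D c 0] by simp

lemma K2_mapconst: "K2 n D (map_poly const_mp g) = [:g:]"
proof (induct g)
  case 0
  then show ?case by simp
next
  case (pCons a g)
  have "K2 n D (map_poly const_mp (pCons a g)) = K2 n D (pCons (const_mp a) (map_poly const_mp g))"
    by (simp add: map_poly_pCons)
  also have "\<dots> = [:[:a:]:] + Yv * [:g:]" by (simp add: K2_pCons pCons(2) Kc_const)
  also have "\<dots> = [:pCons a g:]" by (simp add: Yv_def)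
  finally show ?case .
qed

lemma ev_Kc: "ev y0 (Kc n D a) = K n D a"
  by (rule poly_eqI) (simp add: coeff_ev Kc_def coeff_map_poly)

lemma ev_K2: "ev y0 (K2 n D f) = K n D (poly f (const_mp y0))"
proof (induct f)
  case 0
  then show ?case by (simp add: ev_def)
next
  case (pCons a f)
  have "ev y0 (K2 n D (pCons a f)) = K n D a + [:y0:] * ev y0 (K2 n D f)"
    by (simp add: K2_pCons ev_add ev_mult ev_Kc Yv_def ev_const ev_smult)
  also have "\<dots> = K n D (poly (pCons a f) (const_mp y0))"
    by (simp add: pCons(2) K_add K_mult K_const)
  finally show ?case .
qed

lemma coeff_coeff_K2: "coeff (coeff (K2 n D f) k) i = coeff (K n D (coeff f i)) k"
proof (induct f arbitrary: i)
  case 0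
  then show ?case by simp
next
  case (pCons a f)
  have "coeff (K2 n D (pCons a f)) k = [:coeff (K n D a) k:] + [:0,1:] * coeff (K2 n D f) k"
    by (simp add: K2_pCons Kc_def coeff_map_poly Yv_def)
  then show ?case by (cases i) (simp_all add: pCons(2))
qed

lemma K2_inj:
  assumes "allgood n E F" "E < D" "K2 n D F = 0"
  shows "F = 0"
proof (rule poly_eqI)
  fix i
  have "K n D (coeff F i) = 0"
  proof (rule poly_eqI)
    fix k
    have "coeff (K n D (coeff F i)) k = coeff (coeff (K2 n D F) k) i" by (simp add: coeff_coeff_K2)
    then show "coeff (K n D (coeff F i)) k = coeff 0 k" using assms(3) by simp
  qed
  then show "coeff F i = coeff 0 i" using K_inj[of n E "coeff F i" D] assms(1,2) by (simp add: allgood_def)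
qed

lemma degree_coeff_K2: "degree (coeff (K2 n D f) k) \<le> degree f"
  by (rule degree_le) (simp add: coeff_coeff_K2 coeff_eq_0)

lemma psi_coeff: "coeff (poly P [:c:]) e = poly (map_poly (\<lambda>x. coeff x e) P) c"
proof (induct P)
  case 0
  then show ?case by simp
next
  case (pCons a P)
  then show ?case by (simp add: map_poly_pCons)
qed

lemma psi_deg: "(\<forall>k. degree (coeff P k) \<le> d) \<Longrightarrow> degree (poly P [:c:]) \<le> (d::nat)"
proof (induct P)
  case 0
  then show ?case by simp
next
  case (pCons a P)
  have a: "degree a \<le> d" using pCons(3)[rule_format, of 0] by simp
  have "\<forall>k. degree (coeff P k) \<le> d" using pCons(3) by (metis coeff_pCons_Suc)
  then have "degree (poly P [:c:]) \<le> d" by (rule pCons(2))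
  then have "degree (smult c (poly P [:c:])) \<le> d" using degree_smult_le le_trans by blast
  then show ?case using a by (simp add: degree_add_le)
qed

lemma ydeg:
  fixes G H :: "real poly poly" and g :: "real poly"
  assumes GH: "G = smult g (H^2)" and g0: "g \<noteq> 0" and dG: "\<forall>k. degree (coeff G k) \<le> d"
  shows "\<forall>k. degree (coeff H k) \<le> d"
proof (rule ccontr)
  assume "\<not> (\<forall>k. degree (coeff H k) \<le> d)"
  then obtain k0 where k0: "degree (coeff H k0) > d" by (auto simp: not_le)
  have k0H: "k0 \<le> degree H"
  proof (rule ccontr)
    assume "\<not> k0 \<le> degree H"
    then have "coeff H k0 = 0" by (simp add: coeff_eq_0)
    with k0 show False by simp
  qed
  define A where "A = (\<lambda>k. degree (coeff H k)) ` {..degree H}"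
  define e where "e = Max A"
  have finA: "finite A" "A \<noteq> {}" by (auto simp: A_def)
  have eA: "e \<in> A" unfolding e_def using finA by (rule Max_in)
  then obtain k1 where k1: "k1 \<le> degree H" "degree (coeff H k1) = e" by (auto simp: A_def)
  have "degree (coeff H k0) \<le> e" unfolding e_def using finA k0H by (intro Max_ge) (auto simp: A_def)
  then have ed: "e > d" using k0 by simp
  have allk: "degree (coeff H k) \<le> e" for k
  proof (cases "k \<le> degree H")
    case True
    then show ?thesis unfolding e_def using finA by (intro Max_ge) (auto simp: A_def)
  next
    case False
    then show ?thesis by (simp add: coeff_eq_0)
  qed
  define T where "T = map_poly (\<lambda>x. coeff x e) H"
  have "coeff H k1 \<noteq> 0" using k1 ed by auto
  then have "coeff (coeff H k1) e \<noteq> 0" using k1 by (metis leading_coeff_0_iff)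
  then have "coeff T k1 \<noteq> 0" by (simp add: T_def coeff_map_poly)
  then have "T \<noteq> 0" by auto
  then obtain c where c: "poly T c \<noteq> 0" using poly_all_0_iff_0 by blast
  define P where "P = poly H [:c:]"
  have "coeff P e \<noteq> 0" using c by (simp add: P_def psi_coeff T_def)
  then have eP: "e \<le> degree P" and P0: "P \<noteq> 0" using le_degree by auto
  have "poly G [:c:] = g * P^2" by (simp add: GH P_def)
  then have "degree (poly G [:c:]) = degree g + 2 * degree P"
    using g0 P0 by (simp add: degree_mult_eq degree_power_eq)
  moreover have "degree (poly G [:c:]) \<le> d" using dG by (rule psi_deg)
  ultimately show False using eP ed by simp
qed

definition lag :: "(nat \<Rightarrow> real) \<Rightarrow> nat \<Rightarrow> nat \<Rightarrow> real poly" where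
  "lag ys d j = (\<Prod>i\<in>{..d}-{j}. smult (1/(ys j - ys i)) [:- ys i, 1:])"

lemma lag_eval:
  assumes inj: "inj_on ys {..d}" and j: "j \<le> d" and k: "k \<le> d"
  shows "poly (lag ys d j) (ys k) = (if k = j then 1 else 0)"
proof (cases "k = j")
  case True
  have "poly (lag ys d j) (ys k) = (\<Prod>i\<in>{..d}-{j}. poly (smult (1/(ys j - ys i)) [:- ys i, 1:]) (ys k))"
    unfolding lag_def poly_prod ..
  also have "\<dots> = (\<Prod>i\<in>{..d}-{j}. 1)"
  proof (rule prod.cong[OF refl])
    fix i assume "i \<in> {..d}-{j}"
    then have "ys j \<noteq> ys i" using inj j by (auto dest: inj_onD)
    then have ne: "ys j - ys i \<noteq> 0" by simp
    show "poly (smult (1/(ys j - ys i)) [:- ys i, 1:]) (ys k) = 1"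
      using True \<open>ys j \<noteq> ys i\<close> by (simp add: divide_simps)
  qed
  finally show ?thesis using True by simp
next
  case False
  have "poly (lag ys d j) (ys k) = (\<Prod>i\<in>{..d}-{j}. poly (smult (1/(ys j - ys i)) [:- ys i, 1:]) (ys k))"
    unfolding lag_def poly_prod ..
  also have "\<dots> = 0"
  proof (rule prod_zero)
    show "finite ({..d}-{j})" by simp
    show "\<exists>i\<in>{..d}-{j}. poly (smult (1/(ys j - ys i)) [:- ys i, 1:]) (ys k) = 0"
      using False k by (intro bexI[of _ k]) auto
  qed
  finally show ?thesis using False by simp
qed

lemma lag_degree:
  assumes "j \<le> d"
  shows "degree (lag ys d j) \<le> d"
proof -
  have "degree (lag ys d j) \<le> sum (degree \<circ> (\<lambda>i. smult (1/(ys j - ys i)) [:- ys i, 1:])) ({..d}-{j})"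
    unfolding lag_def by (rule degree_prod_sum_le) simp
  also have "\<dots> \<le> sum (\<lambda>i. 1) ({..d}-{j})"
    by (rule sum_mono) (simp add: degree_smult_le[THEN order_trans])
  also have "\<dots> = d" using assms by simp
  finally show ?thesis .
qed

lemma interp:
  fixes p :: "real poly"
  assumes inj: "inj_on ys {..d}" and dp: "degree p \<le> d"
  shows "p = (\<Sum>j\<le>d. smult (poly p (ys j)) (lag ys d j))"
proof (rule poly_eqI_degree[where A="ys ` {..d}"])
  fix x assume "x \<in> ys ` {..d}"
  then obtain k where k: "k \<le> d" "x = ys k" by auto
  have "poly (\<Sum>j\<le>d. smult (poly p (ys j)) (lag ys d j)) x = (\<Sum>j\<le>d. poly p (ys j) * (if k = j then 1 else 0))"
    using k inj by (simp add: poly_sum lag_eval)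
  also have "\<dots> = (\<Sum>j\<le>d. if j = k then poly p (ys j) else 0)" by (rule sum.cong) auto
  also have "\<dots> = poly p x" using k by (simp add: sum.delta)
  finally show "poly p x = poly (\<Sum>j\<le>d. smult (poly p (ys j)) (lag ys d j)) x" ..
next
  have c: "card (ys ` {..d}) = Suc d" using inj by (simp add: card_image)
  then show "degree p < card (ys ` {..d})" using dp by simp
  have "degree (\<Sum>j\<le>d. smult (poly p (ys j)) (lag ys d j)) \<le> d"
  proof (rule degree_sum_le)
    fix j assume "j \<in> {..d}"
    then have "degree (lag ys d j) \<le> d" by (intro lag_degree) simp
    then show "degree (smult (poly p (ys j)) (lag ys d j)) \<le> d" using degree_smult_le le_trans by blast
  qed simp
  then show "degree (\<Sum>j\<le>d. smult (poly p (ys j)) (lag ys d j)) < card (ys ` {..d})" using c by simp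
qed

lemma sqrt_rel:
  fixes A B :: "real poly"
  assumes A0: "A \<noteq> 0" and eq: "A^2 = smult l (B^2)"
  shows "\<exists>c. B = smult c A"
proof -
  have "lead_coeff A ^ 2 = l * lead_coeff B ^ 2"
    using arg_cong[OF eq, of lead_coeff] by (simp add: lead_coeff_power lead_coeff_smult)
  moreover have "lead_coeff A \<noteq> 0" using A0 by simp
  ultimately have la: "l * lead_coeff B ^ 2 > 0" by (metis zero_less_power2)
  have lpos: "l > 0"
  proof (rule ccontr)
    assume "\<not> l > 0"
    then have "l * lead_coeff B ^ 2 \<le> 0" by (simp add: mult_nonpos_nonneg)
    with la show False by simp
  qed
  define s where "s = sqrt l"
  have s2: "s * s = l" using lpos by (simp add: s_def)
  have s0: "s \<noteq> 0" using lpos by (simp add: s_def)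
  have "(A - smult s B) * (A + smult s B) = A^2 - smult (s*s) (B^2)"
    by (simp add: algebra_simps power2_eq_square)
  also have "\<dots> = 0" using eq s2 by simp
  finally have "A = smult s B \<or> A = - smult s B" by (auto simp: eq_neg_iff_add_eq_0)
  then show ?thesis
  proof
    assume "A = smult s B"
    then have "B = smult (1/s) A" using s0 by simp
    then show ?thesis by blast
  next
    assume "A = - smult s B"
    then have "B = smult (-1/s) A" using s0 by simp
    then show ?thesis by blast
  qed
qed



lemma lookup_const_mult: "Poly_Mapping.lookup (const_mp c * p) m = c * Poly_Mapping.lookup p m"
  unfolding const_mp_def mult_map_scale_conv_mult[symmetric] by (simp add: Poly_Mapping.map.rep_eq when_def)

lemma lookup_poly_const:
  "Poly_Mapping.lookup (poly f (const_mp y)) m = poly (map_poly (\<lambda>a. Poly_Mapping.lookup a m) f) y"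
proof (induct f)
  case 0
  then show ?case by simp
next
  case (pCons a f)
  then show ?case by (simp add: map_poly_pCons lookup_add lookup_const_mult)
qed

lemma good_poly_eval: "allgood n E f \<Longrightarrow> good n E (poly f (const_mp y))"
proof (induct f)
  case 0
  then show ?case by simp
next
  case (pCons a f)
  have ga: "good n E a" using pCons(3) unfolding allgood_def by (metis coeff_pCons_0)
  have "allgood n E f" using pCons(3) unfolding allgood_def by (metis coeff_pCons_Suc)
  then have "good n E (poly f (const_mp y))" by (rule pCons(2))
  then have "good n (0 + E) (const_mp y * poly f (const_mp y))" by (intro good_mult good_const)
  then show ?case using ga by (simp add: good_add)
qed

theorem lemma4p3:
  fixes n :: nat and f :: "rmpoly poly"
  assumes A1: "\<forall>i. in_vars n (coeff f i)"
    and A2: "\<forall>y0::real. \<exists>q. in_vars n q \<and> poly f (const_mp y0) = q ^ 2"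
  shows "\<exists>(g :: real poly) (h :: rmpoly poly).
           (\<forall>i. in_vars n (coeff h i)) \<and> f = map_poly const_mp g * h ^ 2"
proof (cases "f = 0")
  case True
  then have "(\<forall>i. in_vars n (coeff (0::rmpoly poly) i)) \<and> f = map_poly const_mp 0 * 0 ^ 2"
    by (simp add: in_vars_def)
  then show ?thesis by blast
next
  case f0: False
  define d where "d = degree f"
  have i0: "coeff f d \<noteq> 0" using f0 by (simp add: d_def)
  then have "Poly_Mapping.keys (coeff f d) \<noteq> {}" by simp
  then obtain m0 where m0: "m0 \<in> Poly_Mapping.keys (coeff f d)" by blast
  define \<phi> where "\<phi> = map_poly (\<lambda>a. Poly_Mapping.lookup a m0) f"
  have "coeff \<phi> d \<noteq> 0" using m0 by (simp add: \<phi>_def coeff_map_poly in_keys_iff)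
  then have \<phi>0: "\<phi> \<noteq> 0" by auto
  define Z where "Z = {y. poly f (const_mp y) = 0}"
  have "Z \<subseteq> {y. poly \<phi> y = 0}"
  proof
    fix y assume "y \<in> Z"
    then have "poly f (const_mp y) = 0" by (simp add: Z_def)
    then have "Poly_Mapping.lookup (poly f (const_mp y)) m0 = 0" by simp
    then show "y \<in> {y. poly \<phi> y = 0}" using lookup_poly_const[of f y m0] by (simp add: \<phi>_def)
  qed
  then have finZ: "finite Z" using poly_roots_finite[OF \<phi>0] finite_subset by blast
  define M where "M = Max (insert 0 Z) + 1"
  define ys where "ys = (\<lambda>j::nat. M + real j)"
  have ysZ: "ys j \<notin> Z" for j
  proof
    assume "ys j \<in> Z"
    then have "ys j \<le> Max (insert 0 Z)" using finZ by simp
    then show False by (simp add: ys_def M_def)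
  qed
  have inj: "inj_on ys {..d}" by (rule inj_onI) (simp add: ys_def)
  have fys: "poly f (const_mp (ys j)) \<noteq> 0" for j using ysZ[of j] by (simp add: Z_def)
  have "\<forall>j. \<exists>q. in_vars n q \<and> poly f (const_mp (ys j)) = q^2" using A2 by blast
  then have "\<exists>q. \<forall>j. in_vars n (q j) \<and> poly f (const_mp (ys j)) = (q j)^2" by (rule choice)
  then obtain q where q: "\<And>j. in_vars n (q j) \<and> poly f (const_mp (ys j)) = (q j)^2" by blast
  have "\<forall>i. \<exists>E. good n E (coeff f i)" using A1 in_vars_good by blast
  then have "\<exists>Ef. \<forall>i. good n (Ef i) (coeff f i)" by (rule choice)
  then obtain Ef where Ef: "\<And>i. good n (Ef i) (coeff f i)" by blast
  have "\<forall>j. \<exists>E. good n E (q j)" using q in_vars_good by blast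
  then have "\<exists>Eq. \<forall>j. good n (Eq j) (q j)" by (rule choice)
  then obtain Eq where Eq: "\<And>j. good n (Eq j) (q j)" by blast
  define E where "E = (\<Sum>i\<le>d. Ef i) + (\<Sum>j\<le>d. Eq j)"
  have gf: "good n E (coeff f i)" for i
  proof (cases "i \<le> d")
    case True
    have "Ef i \<le> (\<Sum>i\<le>d. Ef i)" using True by (intro member_le_sum) auto
    then have "Ef i \<le> E" by (simp add: E_def)
    then show ?thesis using Ef good_mono by blast
  next
    case False
    then show ?thesis by (simp add: coeff_eq_0 d_def)
  qed
  have gq: "good n E (q j)" if "j \<le> d" for j
  proof -
    have "Eq j \<le> (\<Sum>j\<le>d. Eq j)" using that by (intro member_le_sum) auto
    then have "Eq j \<le> E" by (simp add: E_def)
    then show ?thesis using Eq good_mono by blast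
  qed
  have agf: "allgood n E f" using gf by (simp add: allgood_def)
  define D where "D = 2*E + 1"
  define G where "G = K2 n D f"
  have sqG: "\<forall>y0. y0 \<notin> {} \<longrightarrow> (\<exists>Q. ev y0 G = Q^2)"
  proof (intro allI impI)
    fix y0 :: real
    obtain q' where "poly f (const_mp y0) = q'^2" using A2 by blast
    then have "ev y0 G = (K n D q')^2" by (simp add: G_def ev_K2 K_power)
    then show "\<exists>Q. ev y0 G = Q^2" by blast
  qed
  from biv[OF _ sqG] obtain g H where GH: "G = smult g (H^2)" by blast
  have ED: "E < D" by (simp add: D_def)
  have Kq0: "K n D (q j) \<noteq> 0" for j
  proof
    assume K0: "K n D (q j) = 0"
    have "K n D (poly f (const_mp (ys j))) = K n D (q j) ^ 2" using q[of j] by (simp add: K_power)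
    then have "K n D (poly f (const_mp (ys j))) = 0" using K0 by simp
    then have "poly f (const_mp (ys j)) = 0" using K_inj[OF good_poly_eval[OF agf] ED] by blast
    with fys show False by simp
  qed
  have evG: "ev (ys j) G = (K n D (q j))^2" for j
    using q[of j] by (simp add: G_def ev_K2 K_power)
  have "ev (ys 0) G \<noteq> 0" using evG[of 0] Kq0[of 0] by simp
  then have G0: "G \<noteq> 0" by (auto simp: ev_def)
  then have g0: "g \<noteq> 0" using GH by auto
  have "\<exists>c. ev (ys j) H = smult c (K n D (q j))" for j
  proof -
    have "(K n D (q j))^2 = smult (poly g (ys j)) ((ev (ys j) H)^2)"
      using evG[of j] GH by (simp add: ev_smult ev_power)
    then show ?thesis by (rule sqrt_rel[OF Kq0])
  qed
  then have "\<forall>j. \<exists>c. ev (ys j) H = smult c (K n D (q j))" by blast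
  then have "\<exists>c. \<forall>j. ev (ys j) H = smult (c j) (K n D (q j))" by (rule choice)
  then obtain c where c: "\<And>j. ev (ys j) H = smult (c j) (K n D (q j))" by blast
  have dH: "\<forall>k. degree (coeff H k) \<le> d"
  proof (rule ydeg[OF GH g0])
    show "\<forall>k. degree (coeff G k) \<le> d" by (simp add: G_def d_def degree_coeff_K2)
  qed
  define h where "h = (\<Sum>j\<le>d. map_poly const_mp (smult (c j) (lag ys d j)) * [:q j:])"
  have K2h: "K2 n D h = H"
  proof (rule poly_eqI)
    fix k
    have t: "K2 n D (map_poly const_mp (smult (c j) (lag ys d j)) * [:q j:]) =
        [:smult (c j) (lag ys d j):] * Kc n D (q j)" for j
      by (simp only: K2_mult K2_mapconst K2_const)
    have "coeff (K2 n D h) k = (\<Sum>j\<le>d. coeff ([:smult (c j) (lag ys d j):] * Kc n D (q j)) k)"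
      unfolding h_def K2_sum t coeff_sum ..
    also have "\<dots> = (\<Sum>j\<le>d. smult (c j * coeff (K n D (q j)) k) (lag ys d j))"
      by (simp add: Kc_def coeff_map_poly mult.commute)
    also have "\<dots> = (\<Sum>j\<le>d. smult (poly (coeff H k) (ys j)) (lag ys d j))"
    proof (rule sum.cong[OF refl])
      fix j
      have "poly (coeff H k) (ys j) = coeff (ev (ys j) H) k" by (simp add: coeff_ev)
      also have "\<dots> = c j * coeff (K n D (q j)) k" by (simp add: c)
      finally show "smult (c j * coeff (K n D (q j)) k) (lag ys d j) = smult (poly (coeff H k) (ys j)) (lag ys d j)"
        by simp
    qed
    also have "\<dots> = coeff H k" using interp[OF inj dH[rule_format, of k]] by simp
    finally show "coeff (K2 n D h) k = coeff H k" .
  qed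
  have agh: "allgood n E h"
    unfolding h_def
  proof (rule allgood_sum)
    fix j assume "j \<in> {..d}"
    then have "good n E (q j)" using gq by simp
    then have "allgood n (0 + E) (map_poly const_mp (smult (c j) (lag ys d j)) * [:q j:])"
      by (intro allgood_mult allgood_map_const allgood_const_poly)
    then show "allgood n E (map_poly const_mp (smult (c j) (lag ys d j)) * [:q j:])" by simp
  qed
  define \<Delta> where "\<Delta> = f - map_poly const_mp g * h^2"
  have "K2 n D (map_poly const_mp g * h^2) = G"
    by (simp add: K2_mult K2_mapconst power2_eq_square K2h GH)
  then have K2D: "K2 n D \<Delta> = 0" by (simp add: \<Delta>_def K2_diff G_def)
  have "allgood n (0 + (E + E)) (map_poly const_mp g * (h * h))"
    by (intro allgood_mult allgood_map_const agh)
  then have ag2: "allgood n (E + E) (map_poly const_mp g * h^2)" by (simp add: power2_eq_square)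
  have "allgood n (E + E) f" using agf by (rule allgood_mono) simp
  then have "allgood n (E + E) \<Delta>" unfolding \<Delta>_def using ag2 by (rule allgood_diff)
  moreover have "E + E < D" by (simp add: D_def)
  ultimately have "\<Delta> = 0" using K2D by (rule K2_inj)
  then have "f = map_poly const_mp g * h^2" by (simp add: \<Delta>_def)
  moreover have "\<forall>i. in_vars n (coeff h i)" using agh unfolding allgood_def by (blast intro: good_in_vars)
  ultimately show ?thesis by blast
qed


end
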